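(* Let $X$ be a nonempty set. A rack structure $\rhd$ on $X$ is trivial (i.e. $x\rhd y=x$ for all $x,y\in X$) if and only if $(X,\rhd)$ acts faithfully on some nonempty set $M$ and the action satisfies $(m\cdot x)\cdot y=(m\cdot y)\cdot x$ for all $x,y\in X$, $m\in M$.
   Context: A rack is a set $X$ with a binary operation $\rhd$ such that each $x\mapsto x\rhd y$ is bijective and $(x\rhd y)\rhd z=(x\rhd z)\rhd(y\rhd z)$. A stabilizing family of $X$ is a finite family $(u_1,\ldots,u_s)$ with $(\cdots(x\rhd u_1)\cdots)\rhd u_s=x$ for all $x$. A rack action of $X$ on a set $M$ is a map $(m,x)\mapsto m\cdot x$ such that each $m\mapsto m\cdot x$ is a bijection, $(m\cdot x)\cdot y=(m\cdot y)\cdot(x\rhd y)$, and for every stabilizing family $(u_1,\ldots,u_s)$ and every cyclic shift $\sigma$ of $\{1,\ldots,s\}$, $(\cdots(m\cdot u_1)\cdots)\cdot u_s=(\cdots(m\cdot u_{\sigma(1)})\cdots)\cdot u_{\sigma(s)}$. The action is faithful if for each $m\in M$ the map $X\ni x\mapsto m\cdot x\in M$ is injective. *)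

theory Defs
  imports Main
begin

definition rack :: "'a set \<Rightarrow> ('a \<Rightarrow> 'a \<Rightarrow> 'a) \<Rightarrow> bool" where
  "rack X r \<longleftrightarrow>
     (\<forall>x\<in>X. \<forall>y\<in>X. r x y \<in> X) \<and>
     (\<forall>y\<in>X. bij_betw (\<lambda>x. r x y) X X) \<and>
     (\<forall>x\<in>X. \<forall>y\<in>X. \<forall>z\<in>X. r (r x y) z = r (r x z) (r y z))"

definition trivial_rack :: "'a set \<Rightarrow> ('a \<Rightarrow> 'a \<Rightarrow> 'a) \<Rightarrow> bool" where
  "trivial_rack X r \<longleftrightarrow> (\<forall>x\<in>X. \<forall>y\<in>X. r x y = x)"

definition stabilizing_family :: "'a set \<Rightarrow> ('a \<Rightarrow> 'a \<Rightarrow> 'a) \<Rightarrow> 'a list \<Rightarrow> bool" where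
  "stabilizing_family X r us \<longleftrightarrow> set us \<subseteq> X \<and> (\<forall>x\<in>X. foldl r x us = x)"

definition rack_action ::
  "'a set \<Rightarrow> ('a \<Rightarrow> 'a \<Rightarrow> 'a) \<Rightarrow> 'm set \<Rightarrow> ('m \<Rightarrow> 'a \<Rightarrow> 'm) \<Rightarrow> bool" where
  "rack_action X r M act \<longleftrightarrow>
     (\<forall>m\<in>M. \<forall>x\<in>X. act m x \<in> M) \<and>
     (\<forall>x\<in>X. bij_betw (\<lambda>m. act m x) M M) \<and>
     (\<forall>m\<in>M. \<forall>x\<in>X. \<forall>y\<in>X. act (act m x) y = act (act m y) (r x y)) \<and>
     (\<forall>us k. stabilizing_family X r us \<longrightarrow>
        (\<forall>m\<in>M. foldl act m us = foldl act m (rotate k us)))"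

definition faithful_action :: "'a set \<Rightarrow> 'm set \<Rightarrow> ('m \<Rightarrow> 'a \<Rightarrow> 'm) \<Rightarrow> bool" where
  "faithful_action X M act \<longleftrightarrow> (\<forall>m\<in>M. inj_on (\<lambda>x. act m x) X)"

definition commuting_action :: "'a set \<Rightarrow> 'm set \<Rightarrow> ('m \<Rightarrow> 'a \<Rightarrow> 'm) \<Rightarrow> bool" where
  "commuting_action X M act \<longleftrightarrow>
     (\<forall>m\<in>M. \<forall>x\<in>X. \<forall>y\<in>X. act (act m x) y = act (act m y) x)"

end

theory Submission
  imports Defs
begin

definition incr :: "('a \<Rightarrow> int) \<Rightarrow> 'a \<Rightarrow> ('a \<Rightarrow> int)" where
  "incr m x = m(x := m x + 1)"

lemma foldl_incr: "foldl incr m us = (\<lambda>z. m z + int (count_list us z))"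
  by (induction us arbitrary: m) (auto simp: incr_def)

lemma count_rot: "count_list (rotate k us) z = count_list us z"
proof (induction k)
  case (Suc k)
  have "count_list (rotate1 xs) z = count_list xs z" for xs :: "'a list"
    by (cases xs) auto
  then show ?case using Suc by (simp add: rotate_Suc)
qed simp

lemma incr_bij: "bij_betw (\<lambda>m. incr m x) UNIV UNIV"
  apply (rule bij_betw_byWitness[where f' = "\<lambda>m. m(x := m x - 1)"])
  by (auto simp: incr_def)

theorem mainTheorem18:
  fixes X :: "'a set" and r :: "'a \<Rightarrow> 'a \<Rightarrow> 'a"
  assumes "X \<noteq> {}" and "rack X r"
  shows "(trivial_rack X r \<longrightarrow>
           (\<exists>(M :: ('a \<Rightarrow> int) set) act. M \<noteq> {} \<and> rack_action X r M act \<and>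
               faithful_action X M act \<and> commuting_action X M act))
       \<and> (\<forall>(M :: 'm set) act. M \<noteq> {} \<and> rack_action X r M act \<and>
               faithful_action X M act \<and> commuting_action X M act
             \<longrightarrow> trivial_rack X r)"
proof (intro conjI impI allI)
  assume t: "trivial_rack X r"
  have comm: "incr (incr m x) y = incr (incr m y) x" for m :: "'a \<Rightarrow> int" and x y
    by (auto simp: incr_def fun_eq_iff)
  have ra: "rack_action X r UNIV incr"
    unfolding rack_action_def
    using t comm incr_bij
    by (auto simp: trivial_rack_def foldl_incr count_rot)
  have fa: "faithful_action X UNIV incr"
    unfolding faithful_action_def inj_on_def incr_def
    by (auto simp: fun_eq_iff split: if_splits)
  have ca: "commuting_action X UNIV incr"
    using comm by (simp add: commuting_action_def)
  show "\<exists>(M :: ('a \<Rightarrow> int) set) act. M \<noteq> {} \<and> rack_action X r M act \<and>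
               faithful_action X M act \<and> commuting_action X M act"
    using ra fa ca by blast
next
  fix M :: "'m set" and act
  assume h: "M \<noteq> {} \<and> rack_action X r M act \<and> faithful_action X M act \<and> commuting_action X M act"
  show "trivial_rack X r"
    unfolding trivial_rack_def
  proof (intro ballI)
    fix x y assume xy: "x \<in> X" "y \<in> X"
    obtain m where m: "m \<in> M" using h by blast
    have cl: "act m y \<in> M" using h m xy by (simp add: rack_action_def)
    have rx: "r x y \<in> X" using assms(2) xy by (simp add: rack_def)
    have "act (act m y) (r x y) = act (act m y) x"
      using h m xy unfolding rack_action_def commuting_action_def by metis
    then show "r x y = x"
      using h cl rx xy unfolding faithful_action_def inj_on_def by blast
  qed
qed

end
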